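(* Let $S$ be an inverse semigroup that is a mirror semigroup, with semilattice of idempotents $\Sigma=\Sigma(S)$. Then $(S,\leqslant)$ is conditionally directed-complete if and only if $(\Sigma,\leqslant)$ is conditionally directed-complete.
   Context: An inverse semigroup is a semigroup $S$ in which every $s$ has a unique $s^*$ with $ss^*s=s$ and $s^*ss^*=s^*$. $\Sigma(S)$ is the set of idempotents of $S$. The intrinsic order is $s\leqslant t$ iff $s=t\epsilon$ for some idempotent $\epsilon$. A subset of a poset is directed if it is nonempty and any two elements have an upper bound in it. A poset is conditionally directed-complete if every directed subset that is bounded above has a supremum. $S$ is a mirror semigroup if every directed subset of $\Sigma$ having a supremum in $(\Sigma,\leqslant)$ also has a supremum in $(S,\leqslant)$. *)

theory Defs
  imports Main
begin

definition inverse_semigroup :: "('a::semigroup_mult) itself \<Rightarrow> bool" where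
  "inverse_semigroup _ \<longleftrightarrow> (\<forall>s::'a. \<exists>!t. s * t * s = s \<and> t * s * t = t)"

definition idempotents :: "('a::semigroup_mult) set" where
  "idempotents = {e. e * e = e}"

definition intr_le :: "'a::semigroup_mult \<Rightarrow> 'a \<Rightarrow> bool" where
  "intr_le s t \<longleftrightarrow> (\<exists>e\<in>idempotents. s = t * e)"

definition directed :: "('a::semigroup_mult) set \<Rightarrow> bool" where
  "directed D \<longleftrightarrow> D \<noteq> {} \<and> (\<forall>a\<in>D. \<forall>b\<in>D. \<exists>c\<in>D. intr_le a c \<and> intr_le b c)"

definition is_sup_in :: "('a::semigroup_mult) set \<Rightarrow> 'a set \<Rightarrow> 'a \<Rightarrow> bool" where
  "is_sup_in P D x \<longleftrightarrow> x \<in> P \<and> (\<forall>d\<in>D. intr_le d x)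
      \<and> (\<forall>y\<in>P. (\<forall>d\<in>D. intr_le d y) \<longrightarrow> intr_le x y)"

definition bounded_above_in :: "('a::semigroup_mult) set \<Rightarrow> 'a set \<Rightarrow> bool" where
  "bounded_above_in P D \<longleftrightarrow> (\<exists>u\<in>P. \<forall>d\<in>D. intr_le d u)"

definition cond_directed_complete :: "('a::semigroup_mult) set \<Rightarrow> bool" where
  "cond_directed_complete P \<longleftrightarrow>
     (\<forall>D. D \<subseteq> P \<and> directed D \<and> bounded_above_in P D \<longrightarrow> (\<exists>x. is_sup_in P D x))"

definition mirror_semigroup :: "('a::semigroup_mult) itself \<Rightarrow> bool" where
  "mirror_semigroup _ \<longleftrightarrow>
     (\<forall>D::'a set. D \<subseteq> idempotents \<and> directed D \<and> (\<exists>x. is_sup_in idempotents D x)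
        \<longrightarrow> (\<exists>x. is_sup_in UNIV D x))"

end

theory Submission
  imports Defs
begin

definition iv :: "'a::semigroup_mult \<Rightarrow> 'a" where
  "iv s = (THE t. s * t * s = s \<and> t * s * t = t)"

lemma idem_left: "(e::'a::semigroup_mult) * e = e \<Longrightarrow> e * (e * z) = e * z"
  by (metis mult.assoc)

context
  assumes IS: "inverse_semigroup TYPE('a::semigroup_mult)"
begin

lemma iv_ex: "\<exists>!t. (s::'a) * t * s = s \<and> t * s * t = t"
  using IS unfolding inverse_semigroup_def by blast

lemma iv1: "(s::'a) * iv s * s = s" and iv2: "iv s * s * iv s = iv s"
  using theI'[OF iv_ex[of s]] unfolding iv_def by auto

lemma iv_uniq: "(s::'a) * t * s = s \<Longrightarrow> t * s * t = t \<Longrightarrow> t = iv s"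
  unfolding iv_def by (rule the1_equality[OF iv_ex, symmetric]) auto

lemma iv1': "(s::'a) * (iv s * s) = s" using iv1 by (simp add: mult.assoc)
lemma iv1'': "(s::'a) * (iv s * (s * z)) = s * z" using iv1 by (metis mult.assoc)
lemma iv2': "iv (s::'a) * (s * iv s) = iv s" using iv2 by (simp add: mult.assoc)

lemma idem_prod:
  assumes e: "(e::'a) * e = e" and f: "f * f = f"
  shows "(e * f) * (e * f) = e * f"
proof -
  define x where "x = iv (e * f)"
  have h1: "e * (f * (x * (e * f))) = e * f" using iv1[of "e*f"] by (simp add: x_def mult.assoc)
  have h2: "x * (e * (f * x)) = x" using iv2[of "e*f"] by (simp add: x_def mult.assoc)
  have "f * x * e = iv (e * f)"
  proof (rule iv_uniq)
    show "e * f * (f * x * e) * (e * f) = e * f"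
      using h1 e f by (simp add: mult.assoc idem_left)
    have "f * (x * (e * (f * x))) * e = f * x * e" using h2 by (simp add: mult.assoc)
    then show "f * x * e * (e * f) * (f * x * e) = f * x * e"
      using e f by (simp add: mult.assoc idem_left)
  qed
  then have fxe: "f * (x * e) = x" by (simp add: x_def mult.assoc)
  have xx: "x * x = x"
  proof -
    have "x * x = f * (x * (e * (f * x))) * e" using fxe by (metis mult.assoc)
    also have "\<dots> = x" using h2 fxe by (simp add: mult.assoc)
    finally show ?thesis .
  qed
  have "e * f = iv x"
    by (rule iv_uniq) (use h1 h2 in \<open>simp_all add: mult.assoc\<close>)
  moreover have "x = iv x" by (rule iv_uniq) (simp_all add: xx)
  ultimately show ?thesis using xx by simp
qed

lemma idem_comm:
  assumes e: "(e::'a) * e = e" and f: "f * f = f"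
  shows "e * f = f * e"
proof -
  have ef: "(e*f)*(e*f) = e*f" and fe: "(f*e)*(f*e) = f*e" using idem_prod e f by auto
  have "f * e = iv (e * f)"
  proof (rule iv_uniq)
    show "e * f * (f * e) * (e * f) = e * f"
      using ef e f by (simp add: mult.assoc idem_left)
    show "f * e * (e * f) * (f * e) = f * e"
      using fe e f by (simp add: mult.assoc idem_left)
  qed
  moreover have "e * f = iv (e * f)" by (rule iv_uniq) (simp_all add: ef)
  ultimately show ?thesis by simp
qed


lemma iv_idem: "(e::'a) * e = e \<Longrightarrow> iv e = e"
  by (rule iv_uniq[symmetric]) simp_all

lemma iv_iv: "iv (iv (s::'a)) = s"
  by (rule iv_uniq[symmetric]) (simp_all add: iv1 iv2)

lemma idem_r: "((s::'a) * iv s) * (s * iv s) = s * iv s"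
  using iv1 by (metis mult.assoc)
lemma idem_l: "(iv (s::'a) * s) * (iv s * s) = iv s * s"
  using iv2 by (metis mult.assoc)

lemma iv_mult: "iv ((s::'a) * t) = iv t * iv s"
proof (rule iv_uniq[symmetric])
  have c: "(t * iv t) * (iv s * s) = (iv s * s) * (t * iv t)"
    using idem_comm idem_r idem_l by blast
  have "s * t * (iv t * iv s) * (s * t) = s * ((t * iv t) * (iv s * s)) * t"
    by (simp add: mult.assoc)
  also have "\<dots> = s * t" unfolding c by (simp add: mult.assoc iv1' iv1'')
  finally show "s * t * (iv t * iv s) * (s * t) = s * t" .
  have "iv t * iv s * (s * t) * (iv t * iv s) = iv t * ((iv s * s) * (t * iv t)) * iv s"
    by (simp add: mult.assoc)
  also have "\<dots> = iv t * iv s" unfolding c[symmetric]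
    by (metis iv2 mult.assoc)
  finally show "iv t * iv s * (s * t) * (iv t * iv s) = iv t * iv s" .
qed

lemma le_right: assumes "intr_le (s::'a) t" shows "s = t * (iv s * s)"
proof -
  obtain e where e: "e * e = e" and s: "s = t * e" using assms unfolding intr_le_def idempotents_def by auto
  have "iv s * s = (iv t * t) * e"
    unfolding s iv_mult iv_idem[OF e]
    using idem_comm[OF e idem_l[of t]] e by (metis mult.assoc)
  then show ?thesis unfolding s by (simp add: mult.assoc iv1'')
qed

lemma le_inv_prod: assumes "intr_le (s::'a) t" shows "intr_le (iv s * s) (iv t * t)"
proof -
  obtain e where e: "e * e = e" and s: "s = t * e" using assms unfolding intr_le_def idempotents_def by auto
  have "iv s * s = (iv t * t) * e"
    unfolding s iv_mult iv_idem[OF e]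
    using idem_comm[OF e idem_l[of t]] e by (metis mult.assoc)
  then show ?thesis unfolding intr_le_def idempotents_def using e by auto
qed

lemma le_of_left: assumes f: "(f::'a) * f = f" and s: "s = f * t" shows "intr_le s t"
proof -
  have c: "f * (t * iv t) = (t * iv t) * f" using idem_comm[OF f idem_r] .
  have "t * (iv t * f * t) = (t * iv t) * f * t" by (simp add: mult.assoc)
  also have "\<dots> = f * t" unfolding c[symmetric] by (simp add: mult.assoc iv1')
  finally have 1: "s = t * (iv t * f * t)" using s by simp
  have "(iv t * f * t) * (iv t * f * t) = iv t * (f * (t * iv t)) * f * t" by (simp add: mult.assoc)
  also have "\<dots> = iv t * f * t" unfolding c using f by (metis iv2 mult.assoc)
  finally show ?thesis using 1 unfolding intr_le_def idempotents_def by auto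
qed

lemma le_left_ex: assumes "intr_le (s::'a) t" shows "\<exists>f. f * f = f \<and> s = f * t"
proof -
  obtain e where e: "e * e = e" and s: "s = t * e" using assms unfolding intr_le_def idempotents_def by auto
  have c: "e * (iv t * t) = (iv t * t) * e" using idem_comm[OF e idem_l] .
  have "(t * e * iv t) * t = t * ((iv t * t) * e)" unfolding c[symmetric] by (simp add: mult.assoc)
  also have "\<dots> = s" unfolding s by (simp add: mult.assoc iv1'')
  finally have 1: "s = (t * e * iv t) * t" by simp
  have "(t * e * iv t) * (t * e * iv t) = t * (e * (iv t * t) * e) * iv t" by (simp add: mult.assoc)
  also have "\<dots> = t * e * iv t" unfolding c using e by (metis iv1 mult.assoc)
  finally show ?thesis using 1 by blast
qed

lemma le_left: assumes "intr_le (s::'a) t" shows "s = s * iv s * t"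
proof -
  obtain f where f: "f * f = f" and s: "s = f * t" using le_left_ex[OF assms] by auto
  have c: "f * (t * iv t) = (t * iv t) * f" using idem_comm[OF f idem_r] .
  have "s * iv s = f * (t * iv t) * f" unfolding s iv_mult iv_idem[OF f] by (simp add: mult.assoc)
  also have "\<dots> = f * (t * iv t)" unfolding c using f by (metis mult.assoc)
  finally show ?thesis unfolding s by (metis s \<open>s * iv s = _\<close> iv1 mult.assoc)
qed

lemma le_idem: assumes "intr_le (s::'a) t" "t * t = t" shows "t * s = s" "s * s = s"
proof -
  obtain e where e: "e * e = e" and s: "s = t * e" using assms unfolding intr_le_def idempotents_def by auto
  show "t * s = s" unfolding s using assms(2) by (metis mult.assoc)
  show "s * s = s" unfolding s using idem_prod[OF assms(2) e] .
qed


lemma dir1: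
  assumes C: "cond_directed_complete (UNIV::'a set)"
  shows "cond_directed_complete (idempotents::'a set)"
  unfolding cond_directed_complete_def
proof (intro allI impI)
  fix D :: "'a set"
  assume H: "D \<subseteq> idempotents \<and> directed D \<and> bounded_above_in idempotents D"
  then obtain u where u: "u \<in> idempotents" "\<forall>d\<in>D. intr_le d u" unfolding bounded_above_in_def by auto
  have "bounded_above_in UNIV D" unfolding bounded_above_in_def using u by auto
  then obtain x where x: "is_sup_in UNIV D x" using C H unfolding cond_directed_complete_def by blast
  have "intr_le x u" using x u unfolding is_sup_in_def by auto
  then have "x * x = x" using le_idem u unfolding idempotents_def by auto
  then have "is_sup_in idempotents D x" using x unfolding is_sup_in_def idempotents_def by auto
  then show "\<exists>x. is_sup_in idempotents D x" by blast
qed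

lemma dir2:
  assumes M: "mirror_semigroup TYPE('a)"
    and C: "cond_directed_complete (idempotents::'a set)"
  shows "cond_directed_complete (UNIV::'a set)"
  unfolding cond_directed_complete_def
proof (intro allI impI)
  fix D :: "'a set"
  assume H: "D \<subseteq> UNIV \<and> directed D \<and> bounded_above_in UNIV D"
  then obtain u where u: "\<forall>d\<in>D. intr_le d u" unfolding bounded_above_in_def by auto
  define E where "E = (\<lambda>d. iv d * d) ` D"
  have Eid: "E \<subseteq> idempotents" unfolding E_def idempotents_def using idem_l by auto
  have dE: "directed E"
    unfolding directed_def
  proof (intro conjI ballI)
    show "E \<noteq> {}" using H unfolding directed_def E_def by auto
    fix a b assume "a \<in> E" "b \<in> E"
    then obtain d1 d2 where "d1 \<in> D" "d2 \<in> D" "a = iv d1 * d1" "b = iv d2 * d2" unfolding E_def by auto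
    moreover obtain c where "c \<in> D" "intr_le d1 c" "intr_le d2 c" using H \<open>d1 \<in> D\<close> \<open>d2 \<in> D\<close> unfolding directed_def by blast
    ultimately show "\<exists>c\<in>E. intr_le a c \<and> intr_le b c" unfolding E_def using le_inv_prod by blast
  qed
  have uu: "\<forall>g\<in>E. intr_le g (iv u * u)" unfolding E_def using u le_inv_prod by auto
  have "bounded_above_in idempotents E"
    unfolding bounded_above_in_def using uu idem_l unfolding idempotents_def by auto
  then obtain e0 where e0: "is_sup_in idempotents E e0" using C Eid dE unfolding cond_directed_complete_def by blast
  then obtain x where x: "is_sup_in UNIV E x" using M Eid dE unfolding mirror_semigroup_def by blast
  have "intr_le x e0" using x e0 unfolding is_sup_in_def by auto
  moreover have "e0 * e0 = e0" using e0 unfolding is_sup_in_def idempotents_def by auto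
  ultimately have xx: "x * x = x" using le_idem by blast
  have gx: "\<And>g. g \<in> E \<Longrightarrow> x * g = g" using x xx le_idem unfolding is_sup_in_def by blast
  have gu: "\<And>g. g \<in> E \<Longrightarrow> (iv u * u) * g = g" using uu idem_l le_idem by blast
  have "is_sup_in UNIV D (u * x)"
    unfolding is_sup_in_def
  proof (intro conjI ballI impI)
    show "u * x \<in> UNIV" by simp
    fix d assume d: "d \<in> D"
    then have g: "iv d * d \<in> E" unfolding E_def by auto
    have "d = u * (iv d * d)" using le_right u d by blast
    also have "\<dots> = (u * x) * (iv d * d)" using gx[OF g] by (simp add: mult.assoc)
    finally show "intr_le d (u * x)" unfolding intr_le_def idempotents_def using idem_l by blast
  next
    fix y assume y: "\<forall>d\<in>D. intr_le d y"
    define s where "s = x * iv u * y"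
    have "\<forall>g\<in>E. intr_le g s"
    proof
      fix g assume g: "g \<in> E"
      then obtain d where d: "d \<in> D" "g = iv d * d" unfolding E_def by auto
      have "s * g = x * iv u * d" unfolding s_def d(2) using le_right y d by (metis mult.assoc)
      also have "\<dots> = x * ((iv u * u) * g)" unfolding d(2) using le_right u d by (metis mult.assoc)
      also have "\<dots> = g" using gu g gx by simp
      finally have "g = s * g" by simp
      moreover have "g * g = g" using g Eid unfolding idempotents_def by auto
      ultimately show "intr_le g s" unfolding intr_le_def idempotents_def by blast
    qed
    then have "intr_le x s" using x unfolding is_sup_in_def by auto
    then have "x = x * iv x * s" using le_left by blast
    then have xs: "x = x * iv u * y" unfolding s_def iv_idem[OF xx] using xx by (metis mult.assoc)
    have c: "x * (iv u * u) = (iv u * u) * x" using idem_comm[OF xx idem_l] .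
    have "(u * x * iv u) * (u * x * iv u) = u * (x * (iv u * u) * x) * iv u" by (simp add: mult.assoc)
    also have "\<dots> = u * x * iv u" unfolding c using xx by (metis iv1 mult.assoc)
    finally have f: "(u * x * iv u) * (u * x * iv u) = u * x * iv u" .
    have "u * x = (u * x * iv u) * y" using xs by (metis mult.assoc)
    then show "intr_le (u * x) y" using le_of_left[OF f] by blast
  qed
  then show "\<exists>x. is_sup_in UNIV D x" by blast
qed

end

theorem proposition3p7:
  assumes "inverse_semigroup TYPE('a::semigroup_mult)"
      and "mirror_semigroup TYPE('a)"
  shows "cond_directed_complete (UNIV :: 'a set) \<longleftrightarrow> cond_directed_complete (idempotents :: 'a set)"
  using dir1[OF assms(1)] dir2[OF assms(1) assms(2)] by blast

end
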